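(* The equation $Pu=0$ has a nonconstant radial solution $u=u(r)$ (on some interval $0<r<R$) if and only if \[ \beta(t)=\frac{\lambda}{a}p(t)-ik_1 \] for some $k_1\in\mathbb{Z}$ and some real-valued $2\pi$-periodic $p$ with $\int_0^{2\pi}p(t)dt=0$. In this case the radial solutions are exactly $u(r)=C_1\log r+C_2$ if $k_1=0$ and $u(r)=C_1r^{2ak_1}+C_2$ if $k_1\neq0$ ($C_1,C_2$ arbitrary real constants); with $B(t)=e^{ik_1t}\exp\big(\frac{\bar\lambda}{a}\int_0^tp(s)ds\big)$, the corresponding $L$-potentials are $w=iC_1B(t)$ when $k_1=0$ and $w=2iak_1C_1r^{2ak_1}B(t)$ when $k_1\ne0$, and (for $C_1\neq 0$) $w$ is a basic solution of $\mathcal{L}$ with character $(2ak_1,k_1)$.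
   Context: Fix $a>0$, $b\in\mathbb{R}$, $\lambda=a+ib$, and on $(0,\infty)\times\mathbb{S}^1$ (coordinates $(r,t)$) let $L=\lambda\partial_t-ir\partial_r$, $\bar L=\bar\lambda\partial_t+ir\partial_r$. Let $\beta\in C^m(\mathbb{S}^1,\mathbb{C})$, $m\ge2$, with $\frac{1}{2\pi i}\int_0^{2\pi}\beta(t)dt\in\mathbb{Z}$. Define $P=L\bar L+\bar\lambda\beta(t)L+\lambda\overline{\beta(t)}\bar L$, $B(t)=\exp\int_0^t\overline{\beta(s)}ds$, $c(t)=-\bar\lambda\beta(t)B(t)/\overline{B(t)}$, $\mathcal{L}w=Lw-c(t)\bar w$. The $L$-potential of a real function $u$ is $w=B\bar Lu$. A basic solution of $\mathcal{L}$ is a nontrivial solution of $\mathcal{L}w=0$ on $(0,\infty)\times\mathbb{S}^1$ of the form $r^\sigma\phi(t)+\overline{r^\sigma\psi(t)}$ ($\phi,\psi$ $2\pi$-periodic), written with $|\phi|>|\psi|$ if $\sigma\notin\mathbb{R}$ and as $r^\sigma f$ ($f$ nowhere zero) if $\sigma\in\mathbb{R}$; its character is $(\sigma,\text{winding number of }\phi\text{ (resp. }f))$. *)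

theory Defs
  imports "HOL-Analysis.Analysis"
begin

text \<open>Functions on (0,inf) x S^1 are represented as functions of (r,t) on real x real,
  2pi-periodic in t where required.\<close>

definition dR :: "(real \<Rightarrow> real \<Rightarrow> complex) \<Rightarrow> real \<Rightarrow> real \<Rightarrow> complex" where
  "dR w r t = vector_derivative (\<lambda>s. w s t) (at r)"

definition dT :: "(real \<Rightarrow> real \<Rightarrow> complex) \<Rightarrow> real \<Rightarrow> real \<Rightarrow> complex" where
  "dT w r t = vector_derivative (\<lambda>s. w r s) (at t)"

definition Lop :: "complex \<Rightarrow> (real \<Rightarrow> real \<Rightarrow> complex) \<Rightarrow> real \<Rightarrow> real \<Rightarrow> complex" where
  "Lop lam w r t = lam * dT w r t - \<i> * of_real r * dR w r t"

definition Lbarop :: "complex \<Rightarrow> (real \<Rightarrow> real \<Rightarrow> complex) \<Rightarrow> real \<Rightarrow> real \<Rightarrow> complex" where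
  "Lbarop lam w r t = cnj lam * dT w r t + \<i> * of_real r * dR w r t"

definition Pop :: "complex \<Rightarrow> (real \<Rightarrow> complex) \<Rightarrow> (real \<Rightarrow> real \<Rightarrow> complex) \<Rightarrow> real \<Rightarrow> real \<Rightarrow> complex" where
  "Pop lam \<beta> w r t = Lop lam (Lbarop lam w) r t + cnj lam * \<beta> t * Lop lam w r t
                     + lam * cnj (\<beta> t) * Lbarop lam w r t"

definition oint :: "real \<Rightarrow> real \<Rightarrow> (real \<Rightarrow> 'a::real_normed_vector) \<Rightarrow> 'a" where
  "oint x y f = (if x \<le> y then integral {x..y} f else - integral {y..x} f)"

fun nth_vderiv :: "nat \<Rightarrow> (real \<Rightarrow> 'a::real_normed_vector) \<Rightarrow> real \<Rightarrow> 'a" where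
  "nth_vderiv 0 f = f"
| "nth_vderiv (Suc k) f = (\<lambda>x. vector_derivative (nth_vderiv k f) (at x))"

definition Cm :: "nat \<Rightarrow> (real \<Rightarrow> 'a::real_normed_vector) \<Rightarrow> bool" where
  "Cm m f \<longleftrightarrow> (\<forall>k<m. \<forall>x. nth_vderiv k f differentiable (at x))
               \<and> continuous_on UNIV (nth_vderiv m f)"

definition Bexp :: "(real \<Rightarrow> complex) \<Rightarrow> real \<Rightarrow> complex" where
  "Bexp \<beta> t = exp (oint 0 t (\<lambda>s. cnj (\<beta> s)))"

definition cfun :: "complex \<Rightarrow> (real \<Rightarrow> complex) \<Rightarrow> real \<Rightarrow> complex" where
  "cfun lam \<beta> t = - cnj lam * \<beta> t * Bexp \<beta> t / cnj (Bexp \<beta> t)"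

definition Lcal :: "complex \<Rightarrow> (real \<Rightarrow> complex) \<Rightarrow> (real \<Rightarrow> real \<Rightarrow> complex) \<Rightarrow> real \<Rightarrow> real \<Rightarrow> complex" where
  "Lcal lam \<beta> w r t = Lop lam w r t - cfun lam \<beta> t * cnj (w r t)"

definition Lpot :: "complex \<Rightarrow> (real \<Rightarrow> complex) \<Rightarrow> (real \<Rightarrow> real \<Rightarrow> real) \<Rightarrow> real \<Rightarrow> real \<Rightarrow> complex" where
  "Lpot lam \<beta> u r t = Bexp \<beta> t * Lbarop lam (\<lambda>r t. complex_of_real (u r t)) r t"

definition radial_sol :: "complex \<Rightarrow> (real \<Rightarrow> complex) \<Rightarrow> real \<Rightarrow> (real \<Rightarrow> real) \<Rightarrow> bool" where
  "radial_sol lam \<beta> R u \<longleftrightarrow> 0 < R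
     \<and> (\<forall>r\<in>{0<..<R}. u differentiable (at r) \<and> deriv u differentiable (at r))
     \<and> (\<forall>r\<in>{0<..<R}. \<forall>t. Pop lam \<beta> (\<lambda>r t. complex_of_real (u r)) r t = 0)"

definition has_winding :: "(real \<Rightarrow> complex) \<Rightarrow> int \<Rightarrow> bool" where
  "has_winding f n \<longleftrightarrow> continuous_on UNIV f \<and> (\<forall>t. f t \<noteq> 0) \<and>
     (\<exists>\<theta>. continuous_on UNIV \<theta> \<and> (\<forall>t. f t = of_real (cmod (f t)) * exp (\<i> * of_real (\<theta> t)))
          \<and> \<theta> (2*pi) - \<theta> 0 = 2 * pi * of_int n)"

definition Lcal_solution :: "complex \<Rightarrow> (real \<Rightarrow> complex) \<Rightarrow> (real \<Rightarrow> real \<Rightarrow> complex) \<Rightarrow> bool" where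
  "Lcal_solution lam \<beta> w \<longleftrightarrow>
     (\<forall>r>0. \<forall>t. w r (t + 2*pi) = w r t)
     \<and> (\<forall>r>0. \<forall>t. (\<lambda>s. w s t) differentiable (at r) \<and> (\<lambda>s. w r s) differentiable (at t)
                 \<and> Lcal lam \<beta> w r t = 0)"

definition basic_solution :: "complex \<Rightarrow> (real \<Rightarrow> complex) \<Rightarrow> (real \<Rightarrow> real \<Rightarrow> complex) \<Rightarrow> complex \<Rightarrow> int \<Rightarrow> bool" where
  "basic_solution lam \<beta> w \<sigma> n \<longleftrightarrow>
     Lcal_solution lam \<beta> w \<and> (\<exists>r>0. \<exists>t. w r t \<noteq> 0) \<and>
     (if \<sigma> \<in> \<real> then
        (\<exists>f. (\<forall>t. f (t + 2*pi) = f t) \<and> (\<forall>t. f t \<noteq> 0)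
             \<and> (\<forall>r>0. \<forall>t. w r t = of_real r powr \<sigma> * f t) \<and> has_winding f n)
      else
        (\<exists>\<phi> \<psi>. (\<forall>t. \<phi> (t + 2*pi) = \<phi> t) \<and> (\<forall>t. \<psi> (t + 2*pi) = \<psi> t)
             \<and> (\<forall>t. cmod (\<psi> t) < cmod (\<phi> t))
             \<and> (\<forall>r>0. \<forall>t. w r t = of_real r powr \<sigma> * \<phi> t + cnj (of_real r powr \<sigma> * \<psi> t))
             \<and> has_winding \<phi> n))"

end

theory Submission
  imports Defs
begin

lemma oint_deriv:
  fixes f :: "real \<Rightarrow> 'a::banach"
  assumes cf: "continuous_on UNIV f"
  shows "((\<lambda>t. oint 0 t f) has_vector_derivative f x) (at x)"
proof -
  define M where "M = \<bar>x\<bar> + 1"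
  have int: "f integrable_on {c..d}" for c d
    by (rule integrable_continuous_real) (rule continuous_on_subset[OF cf], auto)
  have eq: "oint 0 s f = integral {-M..s} f - integral {-M..0} f" if "s \<in> {-M<..<M}" for s
  proof (cases "0 \<le> s")
    case True
    then show ?thesis using Henstock_Kurzweil_Integration.integral_combine[where a="-M" and c=0 and b=s and f=f, OF _ _ int] that M_def
      unfolding oint_def by (auto simp: algebra_simps)
  next
    case False
    then show ?thesis using Henstock_Kurzweil_Integration.integral_combine[where a="-M" and c=s and b=0 and f=f, OF _ _ int] that M_def
      unfolding oint_def by (auto simp: algebra_simps)
  qed
  have "((\<lambda>u. integral {-M..u} f) has_vector_derivative f x) (at x within {-M..M})"
    by (rule integral_has_vector_derivative) (auto intro: continuous_on_subset[OF cf] simp: M_def)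
  then have "((\<lambda>u. integral {-M..u} f) has_vector_derivative f x) (at x within {-M<..<M})"
    by (rule has_vector_derivative_within_subset) auto
  then have "((\<lambda>u. integral {-M..u} f) has_vector_derivative f x) (at x)"
    by (subst (asm) at_within_open) (auto simp: M_def)
  then have "((\<lambda>u. integral {-M..u} f - integral {-M..0} f) has_vector_derivative f x) (at x)"
    by (rule derivative_eq_intros) auto
  then show ?thesis
    by (rule has_vector_derivative_transform_within_open[where S="{-M<..<M}"])
       (auto simp: M_def eq)
qed

lemma oint_0[simp]: "oint 0 0 f = 0"
  by (simp add: oint_def)

lemma zero_deriv_eq:
  fixes f :: "real \<Rightarrow> 'b::real_normed_vector"
  assumes "convex S" "\<And>x. x \<in> S \<Longrightarrow> (f has_vector_derivative 0) (at x)" "x \<in> S" "y \<in> S"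
  shows "f x = f y"
proof -
  obtain c where "\<And>x. x \<in> S \<Longrightarrow> f x = c"
    using has_vector_derivative_zero_constant[of S f] assms has_vector_derivative_at_within by blast
  then show ?thesis using assms by auto
qed

lemma im_ident: "lam * cnj z - cnj lam * z = 2 * \<i> * of_real (Im (lam * cnj z))"
  by (simp add: complex_eq_iff)

lemma radial_Pop:
  assumes S: "open S" "r \<in> S" and du: "\<forall>s\<in>S. u differentiable (at s)"
    and ddu: "deriv u differentiable (at r)"
  shows "Pop lam \<beta> (\<lambda>r t. complex_of_real (u r)) r t =
     of_real (r * (deriv u r + r * deriv (deriv u) r) - 2 * r * deriv u r * Im (lam * cnj (\<beta> t)))"
proof -
  define w where "w = (\<lambda>(r::real) (t::real). complex_of_real (u r))"
  have dT0: "dT w s t' = 0" for s t' by (simp add: dT_def w_def)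
  have dRw: "dR w s t' = of_real (deriv u s)" if "s \<in> S" for s t'
  proof -
    have "(u has_real_derivative deriv u s) (at s)"
      using du that DERIV_deriv_iff_real_differentiable by blast
    then have "((\<lambda>s. complex_of_real (u s)) has_vector_derivative of_real (deriv u s)) (at s)"
      by (rule has_vector_derivative_of_real)
    then show ?thesis unfolding dR_def w_def by (simp add: vector_derivative_at)
  qed
  have Lb: "Lbarop lam w s t' = \<i> * of_real s * of_real (deriv u s)" if "s \<in> S" for s t'
    using dRw[OF that] by (simp add: Lbarop_def dT0)
  have dTL: "dT (Lbarop lam w) r t = 0"
    by (simp add: dT_def Lbarop_def dR_def w_def)
  have d2: "(deriv u has_real_derivative deriv (deriv u) r) (at r)"
    using ddu DERIV_deriv_iff_real_differentiable by blast
  have "((\<lambda>s. \<i> * of_real s * complex_of_real (deriv u s)) has_vector_derivative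
      \<i> * (of_real (deriv u r) + of_real r * of_real (deriv (deriv u) r))) (at r)"
    by (auto intro!: derivative_eq_intros d2 simp: algebra_simps)
  then have "((\<lambda>s. Lbarop lam w s t) has_vector_derivative
      \<i> * (of_real (deriv u r) + of_real r * of_real (deriv (deriv u) r))) (at r)"
    by (rule has_vector_derivative_transform_within_open[OF _ S]) (simp add: Lb)
  then have dRL: "dR (Lbarop lam w) r t = \<i> * (of_real (deriv u r) + of_real r * of_real (deriv (deriv u) r))"
    by (simp add: dR_def vector_derivative_at)
  have "Pop lam \<beta> w r t = of_real r * (of_real (deriv u r) + of_real r * of_real (deriv (deriv u) r))
      + \<i> * of_real r * of_real (deriv u r) * (lam * cnj (\<beta> t) - cnj lam * \<beta> t)"
    unfolding Pop_def Lop_def dTL dRL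
    by (simp add: dT0 Lb[OF S(2)] dRw[OF S(2)] algebra_simps)
  also have "\<dots> = of_real (r * (deriv u r + r * deriv (deriv u) r) - 2 * r * deriv u r * Im (lam * cnj (\<beta> t)))"
    unfolding im_ident by (simp add: algebra_simps)
  finally show ?thesis unfolding w_def .
qed

definition Ff :: "real \<Rightarrow> real \<Rightarrow> real \<Rightarrow> real \<Rightarrow> real" where
  "Ff c C1 C2 r = (if c = 0 then C1 * ln r + C2 else C1 * r powr (2*c) + C2)"
definition Df :: "real \<Rightarrow> real \<Rightarrow> real \<Rightarrow> real" where
  "Df c C1 r = (if c = 0 then C1 / r else C1 * (2*c) * r powr (2*c - 1))"
definition D2f :: "real \<Rightarrow> real \<Rightarrow> real \<Rightarrow> real" where
  "D2f c C1 r = (if c = 0 then - C1 / r^2 else C1 * (2*c) * (2*c - 1) * r powr (2*c - 2))"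

lemma Ff_deriv: "r > 0 \<Longrightarrow> (Ff c C1 C2 has_real_derivative Df c C1 r) (at r)"
proof -
  assume r: "r > 0"
  show ?thesis
  proof (cases "c = 0")
    case True
    have "((\<lambda>r. C1 * ln r + C2) has_real_derivative C1 * (1/r)) (at r)"
      using r by (intro derivative_eq_intros DERIV_ln_divide) auto
    then show ?thesis using True by (simp add: Ff_def[abs_def] Df_def)
  next
    case False
    have "((\<lambda>r. C1 * r powr (2*c) + C2) has_real_derivative C1 * ((2*c) * r powr (2*c - 1)) + 0) (at r)"
      using r by (intro DERIV_add DERIV_cmult has_real_derivative_powr DERIV_const)
    then show ?thesis using False by (simp add: Ff_def[abs_def] Df_def mult.assoc)
  qed
qed

lemma Df_deriv: "r > 0 \<Longrightarrow> (Df c C1 has_real_derivative D2f c C1 r) (at r)"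
proof -
  assume r: "r > 0"
  show ?thesis
  proof (cases "c = 0")
    case True
    have "((\<lambda>r. C1 * inverse r) has_real_derivative C1 * (- (inverse r ^ Suc (Suc 0)))) (at r)"
      using r by (intro DERIV_cmult DERIV_inverse) simp
    then show ?thesis using True by (simp add: Df_def[abs_def] D2f_def divide_inverse power2_eq_square)
  next
    case False
    have "((\<lambda>r. C1 * (2*c) * r powr (2*c - 1)) has_real_derivative C1 * (2*c) * ((2*c - 1) * r powr (2*c - 1 - 1))) (at r)"
      using r by (intro DERIV_cmult has_real_derivative_powr)
    moreover have "2*c - 1 - 1 = 2*c - 2" by simp
    ultimately show ?thesis using False by (simp add: Df_def[abs_def] D2f_def mult.assoc)
  qed
qed

lemma real_zero_deriv_eq:
  fixes f :: "real \<Rightarrow> real"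
  assumes "convex S" "\<And>x. x \<in> S \<Longrightarrow> (f has_real_derivative 0) (at x)" "x \<in> S" "y \<in> S"
  shows "f x = f y"
proof -
  obtain c where "\<forall>x\<in>S. f x = c"
    using has_field_derivative_zero_constant[of S f] assms has_field_derivative_at_within by blast
  then show ?thesis using assms by auto
qed

lemma radial_backward:
  assumes R: "R > 0" and u: "\<forall>r\<in>{0<..<R}. u r = Ff c C1 C2 r" and r: "r \<in> {0<..<R}"
  shows "(u has_real_derivative Df c C1 r) (at r)" "deriv u r = Df c C1 r"
    "(deriv u has_real_derivative D2f c C1 r) (at r)"
proof -
  have du: "(u has_real_derivative Df c C1 s) (at s)" if s: "s \<in> {0<..<R}" for s
  proof (rule has_field_derivative_transform_within_open[where S="{0<..<R}"])
    show "(Ff c C1 C2 has_real_derivative Df c C1 s) (at s)" using s Ff_deriv by simp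
    show "open {0<..<R}" by simp
    show "s \<in> {0<..<R}" by fact
    show "\<And>y. y \<in> {0<..<R} \<Longrightarrow> Ff c C1 C2 y = u y" using u by simp
  qed
  show "(u has_real_derivative Df c C1 r) (at r)" using du[OF r] .
  have dd: "deriv u s = Df c C1 s" if "s \<in> {0<..<R}" for s
    using du[OF that] by (rule DERIV_imp_deriv)
  show "deriv u r = Df c C1 r" using dd[OF r] .
  show "(deriv u has_real_derivative D2f c C1 r) (at r)"
  proof (rule has_field_derivative_transform_within_open[where S="{0<..<R}"])
    show "(Df c C1 has_real_derivative D2f c C1 r) (at r)" using r Df_deriv by simp
    show "open {0<..<R}" by simp
    show "r \<in> {0<..<R}" by fact
    show "\<And>y. y \<in> {0<..<R} \<Longrightarrow> Df c C1 y = deriv u y" using dd by simp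
  qed
qed

lemma powr_mul_pred: "r > 0 \<Longrightarrow> r * r powr (x - 1) = r powr (x::real)"
proof -
  assume r: "r > 0"
  have "r * r powr (x - 1) = r powr 1 * r powr (x - 1)" using r by simp
  also have "\<dots> = r powr (1 + (x - 1))" by (rule powr_add[symmetric])
  finally show ?thesis by simp
qed

lemma radial_char_back:
  assumes R: "R > 0" and Im: "\<forall>t. Im (lam * cnj (\<beta> t)) = c"
    and u: "\<forall>r\<in>{0<..<R}. u r = Ff c C1 C2 r"
  shows "radial_sol lam \<beta> R u"
  unfolding radial_sol_def
proof (intro conjI ballI allI)
  show "0 < R" by fact
  fix r assume r: "r \<in> {0<..<R}"
  note rb = radial_backward[OF R u r]
  show "u differentiable (at r)" using rb(1) real_differentiable_def by blast
  show "deriv u differentiable (at r)" using rb(3) real_differentiable_def by blast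
  fix t
  have dall: "\<forall>s\<in>{0<..<R}. u differentiable (at s)"
    using radial_backward(1)[OF R u] real_differentiable_def by blast
  have "Pop lam \<beta> (\<lambda>r t. complex_of_real (u r)) r t =
     of_real (r * (deriv u r + r * deriv (deriv u) r) - 2 * r * deriv u r * Im (lam * cnj (\<beta> t)))"
    by (rule radial_Pop[OF _ r dall]) (use rb(3) real_differentiable_def in auto)
  also have "deriv (deriv u) r = D2f c C1 r" using rb(3) by (rule DERIV_imp_deriv)
  also have "r * (deriv u r + r * D2f c C1 r) - 2 * r * deriv u r * Im (lam * cnj (\<beta> t)) = 0"
  proof (cases "c = 0")
    case True
    then show ?thesis using r rb(2) Im by (simp add: Df_def D2f_def power2_eq_square field_simps)
  next
    case False
    have rp: "r * r powr (2*c - 2) = r powr (2*c - 1)"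
      using powr_mul_pred[of r "2*c-1"] r by (simp add: algebra_simps)
    have "r * (Df c C1 r + r * D2f c C1 r) - 2 * r * Df c C1 r * c =
          r * C1 * (2*c) * (r powr (2*c-1) + (2*c-1) * (r * r powr (2*c-2))) - 2 * r * (C1 * (2*c) * r powr (2*c-1)) * c"
      using False by (simp add: Df_def D2f_def algebra_simps)
    also have "\<dots> = 0" unfolding rp by (simp add: algebra_simps)
    finally show ?thesis using rb(2) Im by simp
  qed
  finally show "Pop lam \<beta> (\<lambda>r t. complex_of_real (u r)) r t = 0" by simp
qed

lemma radial_char_fwd:
  assumes Im: "\<forall>t. Im (lam * cnj (\<beta> t)) = c" and rs: "radial_sol lam \<beta> R u"
  shows "\<exists>C1 C2. \<forall>r\<in>{0<..<R}. u r = Ff c C1 C2 r"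
proof -
  define S where "S = {0<..<R::real}"
  have R: "R > 0" and dall: "\<forall>s\<in>S. u differentiable (at s)"
    and ddall: "\<forall>s\<in>S. deriv u differentiable (at s)"
    and P0: "\<forall>s\<in>S. Pop lam \<beta> (\<lambda>r t. complex_of_real (u r)) s 0 = 0"
    using rs unfolding radial_sol_def S_def by auto
  have cS: "convex S" "open S" by (simp_all add: S_def)
  have mS: "R/2 \<in> S" using R by (simp add: S_def)
  have du: "(u has_real_derivative deriv u s) (at s)" if "s \<in> S" for s
    using dall that DERIV_deriv_iff_real_differentiable by blast
  have ddu: "(deriv u has_real_derivative deriv (deriv u) s) (at s)" if "s \<in> S" for s
    using ddall that DERIV_deriv_iff_real_differentiable by blast
  have ode: "(1 - 2*c) * deriv u s + s * deriv (deriv u) s = 0" if s: "s \<in> S" for s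
  proof -
    have "of_real (s * (deriv u s + s * deriv (deriv u) s) - 2 * s * deriv u s * Im (lam * cnj (\<beta> 0))) = (0::complex)"
      using radial_Pop[OF cS(2) s dall, of lam \<beta> 0] ddall s P0 by simp
    then have "s * (deriv u s + s * deriv (deriv u) s) - 2 * s * deriv u s * Im (lam * cnj (\<beta> 0)) = 0"
      by (simp only: of_real_eq_0_iff)
    then have "s * (deriv u s + s * deriv (deriv u) s) - 2 * s * deriv u s * c = 0"
      by (simp only: Im[rule_format])
    then have "s * ((1 - 2*c) * deriv u s + s * deriv (deriv u) s) = 0"
      by (simp add: algebra_simps)
    then show ?thesis using s by (simp add: S_def)
  qed
  define g where "g s = s powr (1 - 2*c) * deriv u s" for s
  have gd: "(g has_real_derivative 0) (at s)" if s: "s \<in> S" for s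
  proof -
    have s0: "s > 0" using s by (simp add: S_def)
    have "(g has_real_derivative ((1 - 2*c) * s powr (1 - 2*c - 1)) * deriv u s + s powr (1 - 2*c) * deriv (deriv u) s) (at s)"
      unfolding g_def[abs_def] by (rule DERIV_cong[OF DERIV_mult[OF has_real_derivative_powr[OF s0] ddu[OF s]]]) (simp add: algebra_simps)
    also have "s powr (1 - 2*c) = s * s powr (1 - 2*c - 1)" using powr_mul_pred[OF s0, of "1 - 2*c"] by simp
    also have "((1 - 2*c) * s powr (1 - 2*c - 1)) * deriv u s + s * s powr (1 - 2*c - 1) * deriv (deriv u) s
      = s powr (1 - 2*c - 1) * ((1 - 2*c) * deriv u s + s * deriv (deriv u) s)" by (simp add: algebra_simps)
    also have "\<dots> = 0" using ode[OF s] by simp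
    finally show ?thesis .
  qed
  define K where "K = g (R/2)"
  have duK: "deriv u s = K * s powr (2*c - 1)" if s: "s \<in> S" for s
  proof -
    have s0: "s > 0" using s by (simp add: S_def)
    have "g s = K" unfolding K_def using real_zero_deriv_eq[OF cS(1) gd s mS] .
    then have "s powr (2*c - 1) * (s powr (1 - 2*c) * deriv u s) = s powr (2*c - 1) * K" by (simp add: g_def)
    moreover have AB: "s powr (2*c - 1) * s powr (1 - 2*c) = 1"
      using s0 by (simp add: powr_add[symmetric])
    ultimately have "(s powr (2*c - 1) * s powr (1 - 2*c)) * deriv u s = s powr (2*c - 1) * K"
      by (metis mult.assoc)
    then have "1 * deriv u s = s powr (2*c - 1) * K" unfolding AB .
    then show ?thesis by (simp only: mult.commute mult_1)
  qed
  show ?thesis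
  proof (cases "c = 0")
    case True
    define h where "h s = u s - K * ln s" for s
    have hd: "(h has_real_derivative 0) (at s)" if s: "s \<in> S" for s
    proof -
      have s0: "s > 0" using s by (simp add: S_def)
      have "(h has_real_derivative deriv u s - K * (1/s)) (at s)"
        unfolding h_def[abs_def] by (intro DERIV_diff DERIV_cmult DERIV_ln_divide du s s0)
      moreover have "deriv u s - K * (1/s) = 0"
        using duK[OF s] True s0 by (simp add: powr_minus divide_inverse)
      ultimately show ?thesis by simp
    qed
    show ?thesis
    proof (intro exI ballI)
      fix r assume r: "r \<in> {0<..<R}"
      have rS: "r \<in> S" using r by (simp add: S_def)
      have "h r = h (R/2)" by (rule real_zero_deriv_eq[OF cS(1) hd rS mS])
      then show "u r = Ff c K (h (R/2)) r" using True by (simp add: Ff_def h_def)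
    qed
  next
    case False
    define h where "h s = u s - K / (2*c) * s powr (2*c)" for s
    have hd: "(h has_real_derivative 0) (at s)" if s: "s \<in> S" for s
    proof -
      have s0: "s > 0" using s by (simp add: S_def)
      have "(h has_real_derivative deriv u s - K / (2*c) * ((2*c) * s powr (2*c - 1))) (at s)"
        unfolding h_def[abs_def] by (intro DERIV_diff DERIV_cmult has_real_derivative_powr du s s0)
      moreover have "deriv u s - K / (2*c) * ((2*c) * s powr (2*c - 1)) = 0"
        using duK[OF s] False by simp
      ultimately show ?thesis by simp
    qed
    show ?thesis
    proof (intro exI ballI)
      fix r assume r: "r \<in> {0<..<R}"
      have rS: "r \<in> S" using r by (simp add: S_def)
      have "h r = h (R/2)" by (rule real_zero_deriv_eq[OF cS(1) hd rS mS])
      then show "u r = Ff c (K / (2*c)) (h (R/2)) r" using False by (simp add: Ff_def h_def)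
    qed
  qed
qed

lemma Bexp_deriv:
  assumes "continuous_on UNIV \<beta>"
  shows "(Bexp \<beta> has_vector_derivative cnj (\<beta> t) * Bexp \<beta> t) (at t)"
proof -
  have "((\<lambda>t. oint 0 t (\<lambda>s. cnj (\<beta> s))) has_vector_derivative cnj (\<beta> t)) (at t)"
    by (rule oint_deriv) (intro continuous_on_cnj assms)
  from field_vector_diff_chain_at[OF this DERIV_exp]
  show ?thesis by (simp add: Bexp_def[abs_def] o_def)
qed

lemma Bexp_nz: "Bexp \<beta> t \<noteq> 0" by (simp add: Bexp_def)

lemma real_oint_deriv:
  fixes p :: "real \<Rightarrow> real"
  assumes "continuous_on UNIV p"
  shows "((\<lambda>t. oint 0 t p) has_real_derivative p x) (at x)"
  using oint_deriv[OF assms] has_real_derivative_iff_has_vector_derivative by blast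

lemma ofreal_vd: "(complex_of_real has_vector_derivative 1) (at t)"
  using has_vector_derivative_of_real[OF DERIV_ident[where F="at t"]] by (simp add: o_def)

lemma lam_p: "a \<noteq> 0 \<Longrightarrow> Complex a b / of_real a * of_real x = Complex x (b * x / a)"
  by (simp add: complex_eq_iff)

lemma hyp_facts:
  assumes lam: "lam = Complex a b" and a: "a > 0"
    and bet: "\<forall>t. \<beta> t = lam / of_real a * of_real (p t) - \<i> * of_int k1"
    and cb: "continuous_on UNIV \<beta>"
  shows "\<And>t. p t = Re (\<beta> t)" "continuous_on UNIV p"
    "\<And>t. Im (lam * cnj (\<beta> t)) = a * of_int k1"
    "\<And>t. Bexp \<beta> t = exp (\<i> * of_int k1 * of_real t) * exp (cnj lam / of_real a * of_real (oint 0 t p))"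
proof -
  have bt: "\<beta> t = Complex (p t) (b * p t / a - of_int k1)" for t
    using bet lam_p[of a b "p t"] a lam by (simp add: complex_eq_iff)
  show pe: "p t = Re (\<beta> t)" for t by (simp add: bt)
  show cp: "continuous_on UNIV p"
    unfolding pe by (intro continuous_on_Re cb)
  show "Im (lam * cnj (\<beta> t)) = a * of_int k1" for t
    using a by (simp add: bt lam field_simps)
  fix t
  define F where "F t = cnj lam / of_real a * of_real (oint 0 t p) + \<i> * of_int k1 * of_real t" for t
  have dF: "(F has_vector_derivative cnj (\<beta> t)) (at t)" for t
  proof -
    have "(F has_vector_derivative cnj lam / of_real a * of_real (p t) + \<i> * of_int k1 * 1) (at t)"
      unfolding F_def[abs_def]
      by (intro derivative_intros has_vector_derivative_of_real real_oint_deriv cp ofreal_vd)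
    moreover have "cnj lam / of_real a * of_real (p t) + \<i> * of_int k1 * 1 = cnj (\<beta> t)"
      using a by (simp add: bt lam complex_eq_iff)
    ultimately show ?thesis by simp
  qed
  have dO: "((\<lambda>t. oint 0 t (\<lambda>s. cnj (\<beta> s))) has_vector_derivative cnj (\<beta> t)) (at t)" for t
    by (rule oint_deriv) (intro continuous_on_cnj cb)
  have "(\<lambda>t. oint 0 t (\<lambda>s. cnj (\<beta> s)) - F t) t = (\<lambda>t. oint 0 t (\<lambda>s. cnj (\<beta> s)) - F t) 0"
    by (rule zero_deriv_eq[where S=UNIV]) (use dO dF in \<open>auto intro!: derivative_eq_intros\<close>)
  then have "oint 0 t (\<lambda>s. cnj (\<beta> s)) = F t" by (simp add: F_def)
  then show "Bexp \<beta> t = exp (\<i> * of_int k1 * of_real t) * exp (cnj lam / of_real a * of_real (oint 0 t p))"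
    by (simp add: Bexp_def F_def exp_add mult.commute)
qed

lemma P_per:
  fixes p :: "real \<Rightarrow> real"
  assumes cp: "continuous_on UNIV p" and per: "\<forall>t. p (t + 2*pi) = p t"
    and i0: "integral {0..2*pi} p = 0"
  shows "oint 0 (t + 2*pi) p = oint 0 t p"
proof -
  define D where "D t = oint 0 (t + 2*pi) p - oint 0 t p" for t
  have dD: "(D has_vector_derivative 0) (at t)" for t
  proof -
    have "(D has_real_derivative p (t + 2*pi) * 1 - p t) (at t)"
      unfolding D_def[abs_def]
      by (intro DERIV_diff DERIV_chain2[OF real_oint_deriv[OF cp]] real_oint_deriv[OF cp]
          derivative_eq_intros) auto
    then show ?thesis using per has_real_derivative_iff_has_vector_derivative by force
  qed
  have "D t = D 0" by (rule zero_deriv_eq[where S=UNIV]) (use dD in auto)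
  also have "D 0 = 0" using i0 by (simp add: D_def oint_def)
  finally show ?thesis by (simp add: D_def)
qed

lemma Bexp_per:
  assumes Bf: "\<forall>t. Bexp \<beta> t = exp (\<i> * of_int k1 * of_real t) * exp (cnj lam / of_real a * of_real (oint 0 t p))"
    and Pp: "\<And>t. oint 0 (t + 2*pi) p = oint 0 t p"
  shows "Bexp \<beta> (t + 2*pi) = Bexp \<beta> t"
proof -
  have "exp (\<i> * of_int k1 * of_real (t + 2*pi)) = exp (\<i> * of_int k1 * of_real t) * exp ((2 * of_int k1 * pi) * \<i>)"
    by (simp add: exp_add[symmetric] algebra_simps)
  also have "exp ((2 * of_int k1 * pi) * \<i>) = 1"
    by (rule exp_integer_2pi) simp
  finally show ?thesis using Bf Pp by simp
qed

lemma Bexp_cont: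
  assumes "continuous_on UNIV \<beta>"
  shows "continuous_on UNIV (Bexp \<beta>)"
proof -
  have "isCont (Bexp \<beta>) t" for t
    using Bexp_deriv[OF assms, of t] differentiableI_vector differentiable_imp_continuous_within by blast
  then show ?thesis by (simp add: continuous_on_eq_continuous_at)
qed

lemma winding:
  fixes p :: "real \<Rightarrow> real"
  assumes lam: "lam = Complex a b" and a: "a > 0" and K: "K \<noteq> 0"
    and Bf: "\<forall>t. Bexp \<beta> t = exp (\<i> * of_int k1 * of_real t) * exp (cnj lam / of_real a * of_real (oint 0 t p))"
    and cp: "continuous_on UNIV p" and i0: "integral {0..2*pi} p = 0"
    and cb: "continuous_on UNIV \<beta>"
  shows "has_winding (\<lambda>t. K * Bexp \<beta> t) k1"
  unfolding has_winding_def
proof (intro conjI allI exI)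
  show "continuous_on UNIV (\<lambda>t. K * Bexp \<beta> t)"
    by (intro continuous_intros Bexp_cont cb)
  show "K * Bexp \<beta> t \<noteq> 0" for t using K Bexp_nz by simp
  define P where "P t = oint 0 t p" for t
  define \<theta> where "\<theta> t = Arg K + of_int k1 * t - b / a * P t" for t
  have contP: "continuous_on UNIV P"
  proof -
    have "isCont P t" for t unfolding P_def using real_oint_deriv[OF cp] DERIV_isCont by blast
    then show ?thesis by (simp add: continuous_on_eq_continuous_at)
  qed
  show "continuous_on UNIV \<theta>" unfolding \<theta>_def[abs_def] by (intro continuous_intros contP)
  fix t
  have e1: "cnj lam / of_real a * of_real (P t) = of_real (P t) + \<i> * of_real (- (b / a * P t))"
    using a by (simp add: lam complex_eq_iff)
  have e2: "exp (cnj lam / of_real a * of_real (P t)) = of_real (exp (P t)) * exp (\<i> * of_real (- (b / a * P t)))"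
    by (simp only: e1 exp_add exp_of_real)
  have KK: "K = of_real (cmod K) * exp (\<i> * of_real (Arg K))" by (rule Arg_eq[OF K])
  have "K * Bexp \<beta> t = K * (exp (\<i> * of_int k1 * of_real t)
       * (of_real (exp (P t)) * exp (\<i> * of_real (- (b / a * P t)))))"
    using Bf e2 by (simp add: P_def)
  also have "\<dots> = of_real (cmod K) * exp (\<i> * of_real (Arg K)) * (exp (\<i> * of_int k1 * of_real t)
       * (of_real (exp (P t)) * exp (\<i> * of_real (- (b / a * P t)))))"
    using KK by metis
  also have "\<dots> = of_real (cmod K * exp (P t)) * exp (\<i> * of_real (\<theta> t))"
    by (simp add: \<theta>_def exp_add[symmetric] algebra_simps)
  finally have eq: "K * Bexp \<beta> t = of_real (cmod K * exp (P t)) * exp (\<i> * of_real (\<theta> t))" .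
  then have "cmod (K * Bexp \<beta> t) = cmod K * exp (P t)"
    by (simp add: norm_mult)
  then show "K * Bexp \<beta> t = of_real (cmod (K * Bexp \<beta> t)) * exp (\<i> * of_real (\<theta> t))"
    using eq by simp
  have "P (2*pi) = 0" using i0 by (simp add: P_def oint_def)
  then show "\<theta> (2*pi) - \<theta> 0 = 2 * pi * of_int k1"
    by (simp add: \<theta>_def P_def)
qed

lemma Lcal_w:
  assumes r: "r > 0" and wdef: "\<forall>s>0. \<forall>t. w s t = K * of_real (s powr \<sigma>) * Bexp \<beta> t"
    and cK: "cnj K = - K" and Im: "\<forall>t. 2 * Im (lam * cnj (\<beta> t)) = \<sigma>"
    and cb: "continuous_on UNIV \<beta>"
  shows "(\<lambda>s. w s t) differentiable (at r)" "(\<lambda>s. w r s) differentiable (at t)"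
    "Lcal lam \<beta> w r t = 0"
proof -
  have "((\<lambda>s. K * of_real (s powr \<sigma>) * Bexp \<beta> t) has_vector_derivative
        K * of_real (\<sigma> * r powr (\<sigma> - 1)) * Bexp \<beta> t) (at r)"
    by (intro has_vector_derivative_mult_left has_vector_derivative_mult_right
        has_vector_derivative_of_real has_real_derivative_powr r)
  then have hR: "((\<lambda>s. w s t) has_vector_derivative K * of_real (\<sigma> * r powr (\<sigma> - 1)) * Bexp \<beta> t) (at r)"
    by (rule has_vector_derivative_transform_within_open[where S="{0<..}"]) (use r wdef in auto)
  have wr: "(\<lambda>s. w r s) = (\<lambda>s. K * of_real (r powr \<sigma>) * Bexp \<beta> s)" using wdef r by auto
  have hT: "((\<lambda>s. w r s) has_vector_derivative K * of_real (r powr \<sigma>) * (cnj (\<beta> t) * Bexp \<beta> t)) (at t)"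
    unfolding wr by (intro has_vector_derivative_mult_right Bexp_deriv cb)
  show "(\<lambda>s. w s t) differentiable (at r)" using hR differentiableI_vector by blast
  show "(\<lambda>s. w r s) differentiable (at t)" using hT differentiableI_vector by blast
  have dR: "dR w r t = K * of_real (\<sigma> * r powr (\<sigma> - 1)) * Bexp \<beta> t"
    unfolding dR_def using hR by (rule vector_derivative_at)
  have dT: "dT w r t = K * of_real (r powr \<sigma>) * (cnj (\<beta> t) * Bexp \<beta> t)"
    unfolding dT_def using hT by (rule vector_derivative_at)
  have Bn: "cnj (Bexp \<beta> t) \<noteq> 0" using Bexp_nz by simp
  have rr: "of_real r * of_real (\<sigma> * r powr (\<sigma> - 1)) = (of_real (\<sigma> * r powr \<sigma>) :: complex)"
    using powr_mul_pred[OF r, of \<sigma>] by (simp flip: of_real_mult add: algebra_simps)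
  have cw: "cfun lam \<beta> t * cnj (w r t) = K * of_real (r powr \<sigma>) * Bexp \<beta> t * (cnj lam * \<beta> t)"
    using Bn wdef r cK by (simp add: cfun_def field_simps)
  have "Lcal lam \<beta> w r t = K * of_real (r powr \<sigma>) * Bexp \<beta> t * (lam * cnj (\<beta> t) - cnj lam * \<beta> t)
      - \<i> * K * Bexp \<beta> t * (of_real r * of_real (\<sigma> * r powr (\<sigma> - 1)))"
    unfolding Lcal_def Lop_def dR dT cw by (simp add: algebra_simps)
  also have "\<dots> = 0"
  proof -
    have I2: "Im (lam * cnj (\<beta> t)) = \<sigma> / 2" using Im[rule_format, of t] by linarith
    show ?thesis unfolding rr im_ident I2 by (simp add: algebra_simps)
  qed
  finally show "Lcal lam \<beta> w r t = 0" .
qed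

lemma Cm_cont: "m \<ge> 2 \<Longrightarrow> Cm m \<beta> \<Longrightarrow> continuous_on UNIV \<beta>"
proof -
  assume "m \<ge> 2" "Cm m \<beta>"
  then have "\<forall>x. nth_vderiv 0 \<beta> differentiable (at x)" unfolding Cm_def
    by (metis (no_types, lifting) \<open>m \<ge> 2\<close> order.strict_trans2 pos2)
  then have "\<forall>x. \<beta> differentiable (at x)" by simp
  then show ?thesis
    by (simp add: continuous_on_eq_continuous_at differentiable_imp_continuous_within)
qed

lemma Ff_k: "a > 0 \<Longrightarrow> Ff (a * of_int k1) C1 C2 r =
   (if k1 = 0 then C1 * ln r + C2 else C1 * r powr (2 * a * of_int k1) + C2)"
  by (simp add: Ff_def mult.assoc)

lemma Lpot_part:
  assumes a: "a > 0" and R: "R > 0"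
    and u: "\<forall>r\<in>{0<..<R}. u r = (if k1 = 0 then C1 * ln r + C2 else C1 * r powr (2 * a * of_int k1) + C2)"
    and r: "r \<in> {0<..<R}"
  shows "Lpot lam \<beta> (\<lambda>r t. u r) r t =
       (if k1 = 0 then \<i> * of_real C1 * Bexp \<beta> t
        else 2 * \<i> * of_real a * of_int k1 * of_real C1 * of_real (r powr (2 * a * of_int k1)) * Bexp \<beta> t)"
proof -
  define c where "c = a * of_int k1"
  have u': "\<forall>r\<in>{0<..<R}. u r = Ff c C1 C2 r" using u a by (simp add: c_def Ff_k)
  have d: "(u has_real_derivative Df c C1 r) (at r)" by (rule radial_backward(1)[OF R u' r])
  have dR: "dR (\<lambda>r t. complex_of_real (u r)) r t = of_real (Df c C1 r)"
    unfolding dR_def by (rule vector_derivative_at) (rule has_vector_derivative_of_real[OF d])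
  have dT: "dT (\<lambda>r t. complex_of_real (u r)) r t = 0" by (simp add: dT_def)
  have r0: "r > 0" using r by simp
  have "Lpot lam \<beta> (\<lambda>r t. u r) r t = Bexp \<beta> t * (\<i> * of_real (r * Df c C1 r))"
    unfolding Lpot_def Lbarop_def dR dT by simp
  also have "r * Df c C1 r = (if k1 = 0 then C1 else 2 * a * of_int k1 * C1 * r powr (2 * a * of_int k1))"
  proof (cases "k1 = 0")
    case True then show ?thesis using r0 by (simp add: Df_def c_def)
  next
    case False
    then have "c \<noteq> 0" using a by (simp add: c_def)
    then have "r * Df c C1 r = C1 * (2*c) * (r * r powr (2*c - 1))" by (simp add: Df_def algebra_simps)
    also have "\<dots> = C1 * (2*c) * r powr (2*c)" using powr_mul_pred[OF r0] by simp
    finally show ?thesis using False by (simp add: c_def algebra_simps)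
  qed
  finally show ?thesis by (simp add: algebra_simps)
qed

lemma basic_part:
  fixes p :: "real \<Rightarrow> real"
  assumes lam: "lam = Complex a b" and a: "a > 0"
    and bet: "\<forall>t. \<beta> t = lam / of_real a * of_real (p t) - \<i> * of_int k1"
    and per: "\<forall>t. p (t + 2*pi) = p t" and i0: "integral {0..2*pi} p = 0"
    and cb: "continuous_on UNIV \<beta>" and C1: "C1 \<noteq> 0"
  shows "basic_solution lam \<beta>
              (\<lambda>r t. if k1 = 0 then \<i> * of_real C1 * Bexp \<beta> t
                     else 2 * \<i> * of_real a * of_int k1 * of_real C1 * of_real (r powr (2 * a * of_int k1)) * Bexp \<beta> t)
              (of_real (2 * a * of_int k1)) k1"
proof -
  note HF = hyp_facts[OF lam a bet cb]
  define w where "w = (\<lambda>r t. if k1 = 0 then \<i> * of_real C1 * Bexp \<beta> t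
                     else 2 * \<i> * of_real a * of_int k1 * of_real C1 * of_real (r powr (2 * a * of_int k1)) * Bexp \<beta> t)"
  define \<sigma> where "\<sigma> = 2 * a * of_int k1"
  define K where "K = (if k1 = 0 then \<i> * of_real C1 else 2 * \<i> * of_real a * of_int k1 * of_real C1)"
  have Pp: "\<And>t. oint 0 (t + 2*pi) p = oint 0 t p" by (rule P_per[OF HF(2) per i0])
  have Bper: "\<And>t. Bexp \<beta> (t + 2*pi) = Bexp \<beta> t" by (rule Bexp_per[OF _ Pp]) (use HF(4) in blast)
  have wdef: "\<forall>s>0. \<forall>t. w s t = K * of_real (s powr \<sigma>) * Bexp \<beta> t"
    by (simp add: w_def K_def \<sigma>_def)
  have cK: "cnj K = - K" by (simp add: K_def)
  have Kn: "K \<noteq> 0" using C1 a by (simp add: K_def)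
  have Im: "\<forall>t. 2 * Im (lam * cnj (\<beta> t)) = \<sigma>" using HF(3) by (simp add: \<sigma>_def)
  note LW = Lcal_w[OF _ wdef cK Im cb]
  have sol: "Lcal_solution lam \<beta> w"
    unfolding Lcal_solution_def
  proof (intro conjI allI impI)
    fix r t :: real
    show "w r (t + 2*pi) = w r t" by (simp add: w_def Bper)
    assume r: "r > 0"
    show "(\<lambda>s. w s t) differentiable (at r)" "(\<lambda>s. w r s) differentiable (at t)" "Lcal lam \<beta> w r t = 0"
      using LW[OF r] by auto
  qed
  have nz: "\<exists>r>0. \<exists>t. w r t \<noteq> 0"
    using wdef Kn Bexp_nz by (intro exI[of _ 1]) auto
  have rep: "\<exists>f. (\<forall>t. f (t + 2*pi) = f t) \<and> (\<forall>t. f t \<noteq> 0)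
             \<and> (\<forall>r>0. \<forall>t. w r t = of_real r powr of_real \<sigma> * f t) \<and> has_winding f k1"
  proof (intro exI conjI allI impI)
    show "K * Bexp \<beta> (t + 2*pi) = K * Bexp \<beta> t" for t by (simp add: Bper)
    show "K * Bexp \<beta> t \<noteq> 0" for t using Kn Bexp_nz by simp
    show "w r t = of_real r powr of_real \<sigma> * (K * Bexp \<beta> t)" if "r > 0" for r t
      using wdef that by (simp add: powr_of_real)
    show "has_winding (\<lambda>t. K * Bexp \<beta> t) k1"
      by (rule winding[OF lam a Kn _ HF(2) i0 cb]) (use HF(4) in blast)
  qed
  have "basic_solution lam \<beta> w (of_real \<sigma>) k1"
    unfolding basic_solution_def using sol nz rep by simp
  then show ?thesis unfolding w_def \<sigma>_def .
qed

lemma forward: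
  assumes lam: "lam = Complex a b" and a: "a > 0" and cb: "continuous_on UNIV \<beta>"
    and bper: "\<forall>t. \<beta> (t + 2*pi) = \<beta> t"
    and bint: "integral {0..2*pi} \<beta> / (2 * pi * \<i>) \<in> \<int>"
    and rs: "radial_sol lam \<beta> R u" and nc: "\<not> (\<exists>C. \<forall>r\<in>{0<..<R}. u r = C)"
  shows "\<exists>k1::int. \<exists>p::real \<Rightarrow> real. (\<forall>t. p (t + 2*pi) = p t) \<and> integral {0..2*pi} p = 0
        \<and> (\<forall>t. \<beta> t = lam / of_real a * of_real (p t) - \<i> * of_int k1)"
proof -
  define S where "S = {0<..<R::real}"
  have R: "R > 0" and dall: "\<forall>s\<in>S. u differentiable (at s)"
    and ddall: "\<forall>s\<in>S. deriv u differentiable (at s)"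
    and P0: "\<forall>s\<in>S. \<forall>t. Pop lam \<beta> (\<lambda>r t. complex_of_real (u r)) s t = 0"
    using rs unfolding radial_sol_def S_def by auto
  have cS: "convex S" "open S" by (simp_all add: S_def)
  have mS: "R/2 \<in> S" using R by (simp add: S_def)
  have du: "(u has_real_derivative deriv u s) (at s)" if "s \<in> S" for s
    using dall that DERIV_deriv_iff_real_differentiable by blast
  have "\<exists>s\<in>S. deriv u s \<noteq> 0"
  proof (rule ccontr)
    assume "\<not> (\<exists>s\<in>S. deriv u s \<noteq> 0)"
    then have "\<And>s. s \<in> S \<Longrightarrow> (u has_real_derivative 0) (at s)" using du by fastforce
    then have "\<forall>r\<in>S. u r = u (R/2)" using real_zero_deriv_eq[OF cS(1) _ _ mS] by blast
    then show False using nc unfolding S_def by blast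
  qed
  then obtain s where s: "s \<in> S" and ds: "deriv u s \<noteq> 0" by blast
  have s0: "s > 0" using s by (simp add: S_def)
  define c where "c = (deriv u s + s * deriv (deriv u) s) / (2 * deriv u s)"
  have Imc: "Im (lam * cnj (\<beta> t)) = c" for t
  proof -
    have "of_real (s * (deriv u s + s * deriv (deriv u) s) - 2 * s * deriv u s * Im (lam * cnj (\<beta> t))) = (0::complex)"
      using radial_Pop[OF cS(2) s dall, of lam \<beta> t] ddall s P0 by simp
    then have "s * (deriv u s + s * deriv (deriv u) s) - 2 * s * deriv u s * Im (lam * cnj (\<beta> t)) = 0"
      by (simp only: of_real_eq_0_iff)
    then have "s * ((deriv u s + s * deriv (deriv u) s) - 2 * deriv u s * Im (lam * cnj (\<beta> t))) = 0"
      by (simp add: algebra_simps)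
    then have "(deriv u s + s * deriv (deriv u) s) = 2 * deriv u s * Im (lam * cnj (\<beta> t))"
      using s0 by simp
    then show ?thesis using ds by (simp add: c_def)
  qed
  define p where "p t = Re (\<beta> t)" for t
  have cp: "continuous_on UNIV p" unfolding p_def[abs_def] by (intro continuous_on_Re cb)
  define A where "A = Complex 1 (b / a)"
  define B where "B = - \<i> * of_real (c / a)"
  have bt: "\<beta> t = A * of_real (p t) + B" for t
  proof -
    have "b * Re (\<beta> t) - a * Im (\<beta> t) = c" using Imc[of t] by (simp add: lam)
    then show ?thesis using a by (simp add: A_def B_def p_def complex_eq_iff field_simps)
  qed
  define I where "I = integral {0..2*pi} p"
  define F where "F t = A * of_real (oint 0 t p) + B * of_real t" for t
  have dF: "(F has_vector_derivative \<beta> t) (at t)" for t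
  proof -
    have "(F has_vector_derivative A * of_real (p t) + B * 1) (at t)"
      unfolding F_def[abs_def]
      by (intro derivative_intros has_vector_derivative_of_real real_oint_deriv cp ofreal_vd)
    then show ?thesis by (simp add: bt)
  qed
  have dO: "((\<lambda>t. oint 0 t \<beta>) has_vector_derivative \<beta> t) (at t)" for t
    by (rule oint_deriv[OF cb])
  have "(\<lambda>t. oint 0 t \<beta> - F t) (2*pi) = (\<lambda>t. oint 0 t \<beta> - F t) 0"
    by (rule zero_deriv_eq[where S=UNIV]) (use dO dF in \<open>auto intro!: derivative_eq_intros\<close>)
  then have e0: "integral {0..2*pi} \<beta> = A * of_real I + B * of_real (2*pi)"
    by (simp add: F_def oint_def I_def)
  obtain n where n: "integral {0..2*pi} \<beta> / (2 * pi * \<i>) = of_int n"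
    using bint Ints_cases by blast
  have nz: "(2 * pi * \<i> :: complex) \<noteq> 0" by simp
  have e1: "integral {0..2*pi} \<beta> = of_int n * (2 * pi * \<i>)"
    using n nz by (simp add: divide_eq_eq)
  have eq: "A * of_real I + B * of_real (2*pi) = of_int n * (2 * pi * \<i>)"
    using e0 e1 by metis
  have I0: "I = 0" using arg_cong[OF eq, of Re] by (simp add: A_def B_def)
  have "b / a * I - c / a * (2*pi) = of_int n * (2*pi)" using arg_cong[OF eq, of Im] by (simp add: A_def B_def)
  then have "- (pi * c) = pi * (a * real_of_int n)" using a I0 by (simp add: field_simps)
  then have "pi * (c + a * of_int n) = 0" by (simp add: algebra_simps)
  then have cn: "c = - a * of_int n" by simp
  show ?thesis
  proof (intro exI conjI allI)
    show "p (t + 2*pi) = p t" for t by (simp add: p_def bper)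
    show "integral {0..2*pi} p = 0" using I0 by (simp add: I_def)
    show "\<beta> t = lam / of_real a * of_real (p t) - \<i> * of_int (- n)" for t
      using a cn by (simp add: bt A_def B_def lam complex_eq_iff field_simps)
  qed
qed

theorem proposition10p1:
  fixes a b :: real and \<beta> :: "real \<Rightarrow> complex" and m :: nat and lam :: complex
  assumes lam_def: "lam = Complex a b"
    and a_pos: "a > 0"
    and m_ge: "m \<ge> 2"
    and beta_Cm: "Cm m \<beta>"
    and beta_per: "\<forall>t. \<beta> (t + 2*pi) = \<beta> t"
    and beta_int: "integral {0..2*pi} \<beta> / (2 * pi * \<i>) \<in> \<int>"
  shows
   "((\<exists>R u. radial_sol lam \<beta> R u \<and> \<not> (\<exists>C. \<forall>r\<in>{0<..<R}. u r = C))
      \<longleftrightarrow>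
     (\<exists>k1::int. \<exists>p::real \<Rightarrow> real. (\<forall>t. p (t + 2*pi) = p t) \<and> integral {0..2*pi} p = 0
        \<and> (\<forall>t. \<beta> t = lam / of_real a * of_real (p t) - \<i> * of_int k1)))
    \<and>
    (\<forall>(k1::int) (p::real \<Rightarrow> real).
       (\<forall>t. p (t + 2*pi) = p t) \<and> integral {0..2*pi} p = 0
       \<and> (\<forall>t. \<beta> t = lam / of_real a * of_real (p t) - \<i> * of_int k1)
      \<longrightarrow>
       (\<forall>t. Bexp \<beta> t = exp (\<i> * of_int k1 * of_real t) * exp (cnj lam / of_real a * of_real (oint 0 t p)))
       \<and> (\<forall>R u. R > 0 \<longrightarrow>
            (radial_sol lam \<beta> R u \<longleftrightarrow>
               (\<exists>C1 C2 :: real. \<forall>r\<in>{0<..<R}.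
                  u r = (if k1 = 0 then C1 * ln r + C2 else C1 * r powr (2 * a * of_int k1) + C2))))
       \<and> (\<forall>R u (C1::real) (C2::real). R > 0 \<and>
            (\<forall>r\<in>{0<..<R}. u r = (if k1 = 0 then C1 * ln r + C2 else C1 * r powr (2 * a * of_int k1) + C2))
            \<longrightarrow> (\<forall>r\<in>{0<..<R}. \<forall>t. Lpot lam \<beta> (\<lambda>r t. u r) r t =
                   (if k1 = 0 then \<i> * of_real C1 * Bexp \<beta> t
                    else 2 * \<i> * of_real a * of_int k1 * of_real C1 * of_real (r powr (2 * a * of_int k1)) * Bexp \<beta> t)))
       \<and> (\<forall>C1::real. C1 \<noteq> 0 \<longrightarrow>
            basic_solution lam \<beta>
              (\<lambda>r t. if k1 = 0 then \<i> * of_real C1 * Bexp \<beta> t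
                     else 2 * \<i> * of_real a * of_int k1 * of_real C1 * of_real (r powr (2 * a * of_int k1)) * Bexp \<beta> t)
              (of_real (2 * a * of_int k1)) k1))"
proof -
  have cb: "continuous_on UNIV \<beta>" by (rule Cm_cont[OF m_ge beta_Cm])
  have part2: "\<And>k1 p. (\<forall>t. p (t + 2*pi) = p t) \<Longrightarrow> integral {0..2*pi} p = 0
       \<Longrightarrow> (\<forall>t. \<beta> t = lam / of_real a * of_real (p t) - \<i> * of_int k1) \<Longrightarrow>
       (\<forall>t. Bexp \<beta> t = exp (\<i> * of_int k1 * of_real t) * exp (cnj lam / of_real a * of_real (oint 0 t p)))
       \<and> (\<forall>R u. R > 0 \<longrightarrow>
            (radial_sol lam \<beta> R u \<longleftrightarrow>
               (\<exists>C1 C2 :: real. \<forall>r\<in>{0<..<R}.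
                  u r = (if k1 = 0 then C1 * ln r + C2 else C1 * r powr (2 * a * of_int k1) + C2))))
       \<and> (\<forall>R u (C1::real) (C2::real). R > 0 \<and>
            (\<forall>r\<in>{0<..<R}. u r = (if k1 = 0 then C1 * ln r + C2 else C1 * r powr (2 * a * of_int k1) + C2))
            \<longrightarrow> (\<forall>r\<in>{0<..<R}. \<forall>t. Lpot lam \<beta> (\<lambda>r t. u r) r t =
                   (if k1 = 0 then \<i> * of_real C1 * Bexp \<beta> t
                    else 2 * \<i> * of_real a * of_int k1 * of_real C1 * of_real (r powr (2 * a * of_int k1)) * Bexp \<beta> t)))
       \<and> (\<forall>C1::real. C1 \<noteq> 0 \<longrightarrow>
            basic_solution lam \<beta>
              (\<lambda>r t. if k1 = 0 then \<i> * of_real C1 * Bexp \<beta> t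
                     else 2 * \<i> * of_real a * of_int k1 * of_real C1 * of_real (r powr (2 * a * of_int k1)) * Bexp \<beta> t)
              (of_real (2 * a * of_int k1)) k1)"
  proof -
    fix k1 p
    assume per: "\<forall>t. p (t + 2*pi) = p t" and i0: "integral {0..2*pi} p = 0"
      and bet: "\<forall>t. \<beta> t = lam / of_real a * of_real (p t) - \<i> * of_int k1"
    note HF = hyp_facts[OF lam_def a_pos bet cb]
    have ImF: "\<forall>t. Im (lam * cnj (\<beta> t)) = a * of_int k1" using HF(3) by blast
    show "?thesis k1 p"
    proof (intro conjI allI impI)
      show "Bexp \<beta> t = exp (\<i> * of_int k1 * of_real t) * exp (cnj lam / of_real a * of_real (oint 0 t p))" for t
        by (rule HF(4))
      fix R :: real and u :: "real \<Rightarrow> real"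
      assume R: "R > 0"
      show "radial_sol lam \<beta> R u \<longleftrightarrow>
               (\<exists>C1 C2 :: real. \<forall>r\<in>{0<..<R}.
                  u r = (if k1 = 0 then C1 * ln r + C2 else C1 * r powr (2 * a * of_int k1) + C2))"
        using radial_char_fwd[OF ImF, of R u] radial_char_back[OF R ImF, of u]
        unfolding Ff_k[OF a_pos] by blast
    next
      fix R :: real and u :: "real \<Rightarrow> real" and C1 C2 :: real
      assume H: "R > 0 \<and> (\<forall>r\<in>{0<..<R}. u r = (if k1 = 0 then C1 * ln r + C2 else C1 * r powr (2 * a * of_int k1) + C2))"
      show "\<forall>r\<in>{0<..<R}. \<forall>t. Lpot lam \<beta> (\<lambda>r t. u r) r t =
                   (if k1 = 0 then \<i> * of_real C1 * Bexp \<beta> t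
                    else 2 * \<i> * of_real a * of_int k1 * of_real C1 * of_real (r powr (2 * a * of_int k1)) * Bexp \<beta> t)"
        using Lpot_part[OF a_pos] H by blast
    next
      fix C1 :: real
      assume "C1 \<noteq> 0"
      then show "basic_solution lam \<beta>
              (\<lambda>r t. if k1 = 0 then \<i> * of_real C1 * Bexp \<beta> t
                     else 2 * \<i> * of_real a * of_int k1 * of_real C1 * of_real (r powr (2 * a * of_int k1)) * Bexp \<beta> t)
              (of_real (2 * a * of_int k1)) k1"
        by (rule basic_part[OF lam_def a_pos bet per i0 cb])
    qed
  qed
  have iff: "(\<exists>R u. radial_sol lam \<beta> R u \<and> \<not> (\<exists>C. \<forall>r\<in>{0<..<R}. u r = C))
      \<longleftrightarrow>
     (\<exists>k1::int. \<exists>p::real \<Rightarrow> real. (\<forall>t. p (t + 2*pi) = p t) \<and> integral {0..2*pi} p = 0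
        \<and> (\<forall>t. \<beta> t = lam / of_real a * of_real (p t) - \<i> * of_int k1))"
  proof
    assume "\<exists>R u. radial_sol lam \<beta> R u \<and> \<not> (\<exists>C. \<forall>r\<in>{0<..<R}. u r = C)"
    then obtain R u where "radial_sol lam \<beta> R u" "\<not> (\<exists>C. \<forall>r\<in>{0<..<R}. u r = C)" by blast
    then show "\<exists>k1::int. \<exists>p::real \<Rightarrow> real. (\<forall>t. p (t + 2*pi) = p t) \<and> integral {0..2*pi} p = 0
        \<and> (\<forall>t. \<beta> t = lam / of_real a * of_real (p t) - \<i> * of_int k1)"
      by (rule forward[OF lam_def a_pos cb beta_per beta_int])
  next
    assume "\<exists>k1::int. \<exists>p::real \<Rightarrow> real. (\<forall>t. p (t + 2*pi) = p t) \<and> integral {0..2*pi} p = 0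
        \<and> (\<forall>t. \<beta> t = lam / of_real a * of_real (p t) - \<i> * of_int k1)"
    then obtain k1 p where bet: "\<forall>t. \<beta> t = lam / of_real a * of_real (p t) - \<i> * of_int k1" by blast
    note HF = hyp_facts[OF lam_def a_pos bet cb]
    have ImF: "\<forall>t. Im (lam * cnj (\<beta> t)) = a * of_int k1" using HF(3) by blast
    define c where "c = a * of_int k1"
    have rs: "radial_sol lam \<beta> 1 (Ff c 1 0)"
      by (rule radial_char_back[OF _ ImF[folded c_def]]) auto
    have "Ff c 1 0 (1/2) \<noteq> Ff c 1 0 (1/4)"
    proof (cases "c = 0")
      case True then show ?thesis by (simp add: Ff_def)
    next
      case False
      show ?thesis
      proof
        assume "Ff c 1 0 (1/2) = Ff c 1 0 (1/4)"
        then have "(1/2::real) powr (2*c) = (1/4) powr (2*c)" using False by (simp add: Ff_def)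
        then have "ln ((1/2::real) powr (2*c)) = ln ((1/4) powr (2*c))" by simp
        then have "2*c * ln (1/2::real) = 2*c * ln (1/4)" by (simp only: ln_powr)
        then have "ln (1/2::real) = ln (1/4)" using False by simp
        then show False by simp
      qed
    qed
    then have "\<not> (\<exists>C. \<forall>r\<in>{0<..<1}. Ff c 1 0 r = C)" by force
    then show "\<exists>R u. radial_sol lam \<beta> R u \<and> \<not> (\<exists>C. \<forall>r\<in>{0<..<R}. u r = C)"
      using rs by blast
  qed
  show ?thesis using iff part2 by blast
qed

end
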